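(* Let $N\in\mathbb{N}$ and let $c_0,\rho_0>0$ and $\kappa_m,\tau_m>0$ for $m=1,\dots,N$. Define $$\tilde c_0=\frac{c_0}{\sqrt{1+\sum_{m=1}^N c_0^2\rho_0\kappa_m}},\qquad\tilde\tau_m=\tau_m(1-N\tilde c_0^2\rho_0\kappa_m),$$ and the attenuation coefficient of Nachman, Smith and Waag $$\alpha^*_{nsw}(\omega)=\frac{-i\omega}{c_0}\left[\frac{c_0}{\tilde c_0}\sqrt{\frac1N\sum_{m=1}^N\frac{1-i\tilde\tau_m\omega}{1-i\tau_m\omega}}-1\right],\qquad\omega\in\mathbb{R}.$$ If $\tilde\tau_m<\tau_m$ for all $m\in\{1,\dots,N\}$, then the kernel $K(\vec x,t)=\frac{1}{\sqrt{2\pi}}\mathcal{F}^{-1}\{e^{-\alpha^*_{nsw}(\cdot)|\vec x|}\}(t)$ is causal.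
   Context: Fourier convention: $\mathcal{F}^{-1}\{\hat f\}(t)=\frac{1}{\sqrt{2\pi}}\int_{\mathbb{R}}e^{-i\omega t}\hat f(\omega)\,d\omega$ (tempered distributions). The square root of a complex number is the root with non-negative real part. $K$ is causal if $t\mapsto K(\vec x,t)$ vanishes for $t<0$ for every $\vec x\in\mathbb{R}^3$. *)

theory Defs
  imports "HOL-Analysis.Analysis"
begin

definition c0_tilde :: "real \<Rightarrow> real \<Rightarrow> (nat \<Rightarrow> real) \<Rightarrow> nat \<Rightarrow> real" where
  "c0_tilde c0 rho0 kappa N = c0 / sqrt (1 + (\<Sum>m=1..N. c0\<^sup>2 * rho0 * kappa m))"

definition tau_tilde :: "real \<Rightarrow> real \<Rightarrow> (nat \<Rightarrow> real) \<Rightarrow> (nat \<Rightarrow> real) \<Rightarrow> nat \<Rightarrow> nat \<Rightarrow> real" where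
  "tau_tilde c0 rho0 kappa tau N m =
     tau m * (1 - real N * (c0_tilde c0 rho0 kappa N)\<^sup>2 * rho0 * kappa m)"

text \<open>Attenuation coefficient of Nachman, Smith and Waag (csqrt = principal root, Re \<ge> 0).\<close>
definition alpha_nsw :: "real \<Rightarrow> real \<Rightarrow> (nat \<Rightarrow> real) \<Rightarrow> (nat \<Rightarrow> real) \<Rightarrow> nat \<Rightarrow> real \<Rightarrow> complex" where
  "alpha_nsw c0 rho0 kappa tau N \<omega> =
     (- \<i> * complex_of_real \<omega> / complex_of_real c0) *
     (complex_of_real (c0 / c0_tilde c0 rho0 kappa N) *
        csqrt ((1 / of_nat N) * (\<Sum>m=1..N.
           (1 - \<i> * complex_of_real (tau_tilde c0 rho0 kappa tau N m * \<omega>)) /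
           (1 - \<i> * complex_of_real (tau m * \<omega>)))) - 1)"

definition inv_fourier :: "(real \<Rightarrow> complex) \<Rightarrow> real \<Rightarrow> complex" where
  "inv_fourier g t = (1 / complex_of_real (sqrt (2 * pi))) *
     (\<integral>\<omega>. exp (- \<i> * complex_of_real (\<omega> * t)) * g \<omega> \<partial>lborel)"

definition smooth_fun :: "(real \<Rightarrow> complex) \<Rightarrow> bool" where
  "smooth_fun \<phi> \<longleftrightarrow> (\<exists>D :: nat \<Rightarrow> real \<Rightarrow> complex. D 0 = \<phi> \<and>
      (\<forall>k t. (D k has_vector_derivative D (Suc k) t) (at t)))"

definition test_fun_on :: "real set \<Rightarrow> (real \<Rightarrow> complex) \<Rightarrow> bool" where
  "test_fun_on U \<phi> \<longleftrightarrow> smooth_fun \<phi> \<and> compact (closure {t. \<phi> t \<noteq> 0})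
      \<and> closure {t. \<phi> t \<noteq> 0} \<subseteq> U"

text \<open>Action of the tempered distribution t \<mapsto> (2 pi)^{-1/2} F^{-1}{ghat}(t) on a test function
  \<phi>: by duality (the bilinear transpose of F^{-1} is F^{-1}),
  \<langle>F^{-1} ghat, \<phi>\<rangle> = \<integral> ghat(\<omega>) (F^{-1} \<phi>)(\<omega>) d\<omega>.\<close>
definition kernel_pairing :: "(real \<Rightarrow> complex) \<Rightarrow> (real \<Rightarrow> complex) \<Rightarrow> complex" where
  "kernel_pairing ghat \<phi> = (1 / complex_of_real (sqrt (2 * pi))) *
     (\<integral>\<omega>. ghat \<omega> * inv_fourier \<phi> \<omega> \<partial>lborel)"

text \<open>K(x,t) = (2 pi)^{-1/2} F^{-1}{Khat(x,.)}(t) is causal iff for every x the distribution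
  t \<mapsto> K(x,t) vanishes on the open set t < 0.\<close>
definition causal_kernel :: "(real^3 \<Rightarrow> real \<Rightarrow> complex) \<Rightarrow> bool" where
  "causal_kernel Khat \<longleftrightarrow>
     (\<forall>x \<phi>. test_fun_on {..<0} \<phi> \<longrightarrow> kernel_pairing (Khat x) \<phi> = 0)"

end

theory Submission
  imports Defs "HOL-Complex_Analysis.Complex_Analysis" "HOL-Probability.Sinc_Integral"
begin



lemma denom_facts:
  fixes w :: complex and \<tau> :: real
  assumes "Im w \<ge> 0" "\<tau> > 0"
  shows "1 - \<i> * of_real \<tau> * w \<noteq> 0"
    and "Re (1 - \<i> * of_real \<tau> * w) \<ge> 1"
    and "Re (1 / (1 - \<i> * of_real \<tau> * w)) \<ge> 0"
    and "cmod w * cmod (1 / (1 - \<i> * of_real \<tau> * w)) \<le> 1 / \<tau>"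
proof -
  have re: "Re (1 - \<i> * of_real \<tau> * w) = 1 + \<tau> * Im w" by simp
  have im: "Im (1 - \<i> * of_real \<tau> * w) = - \<tau> * Re w" by simp
  show r1: "Re (1 - \<i> * of_real \<tau> * w) \<ge> 1" using assms by (simp add: re)
  show nz: "1 - \<i> * of_real \<tau> * w \<noteq> 0"
  proof
    assume "1 - \<i> * of_real \<tau> * w = 0"
    hence "Re (1 - \<i> * of_real \<tau> * w) = 0" by simp
    with r1 show False by simp
  qed
  show "Re (1 / (1 - \<i> * of_real \<tau> * w)) \<ge> 0"
    using r1 by (simp add: Re_divide)
  have cw: "(cmod w)^2 = (Re w)^2 + (Im w)^2" by (rule cmod_power2)
  have "0 \<le> 1 + 2 * \<tau> * Im w" using assms by simp
  hence "(\<tau> * cmod w)^2 \<le> (cmod (1 - \<i> * of_real \<tau> * w))^2"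
    unfolding cmod_power2[of "1 - \<i> * of_real \<tau> * w"] re im power_mult_distrib cw
    by (simp add: algebra_simps power2_eq_square)
  hence "\<tau> * cmod w \<le> cmod (1 - \<i> * of_real \<tau> * w)"
    by (rule power2_le_imp_le) simp
  thus "cmod w * cmod (1 / (1 - \<i> * of_real \<tau> * w)) \<le> 1 / \<tau>"
    using nz assms by (simp add: norm_divide field_simps)
qed

locale nsw =
  fixes N :: nat and c0 rho0 :: real and kappa tau :: "nat \<Rightarrow> real"
  assumes N: "N \<ge> 1"
    and c0: "c0 > 0" and rho0: "rho0 > 0"
    and kap: "\<And>m. m \<in> {1..N} \<Longrightarrow> kappa m > 0"
    and tau: "\<And>m. m \<in> {1..N} \<Longrightarrow> tau m > 0"
    and ttl: "\<And>m. m \<in> {1..N} \<Longrightarrow> tau_tilde c0 rho0 kappa tau N m < tau m"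
begin

definition "S = (\<Sum>m=1..N. c0\<^sup>2 * rho0 * kappa m)"
definition "tt m = tau_tilde c0 rho0 kappa tau N m"
definition "A = c0 / c0_tilde c0 rho0 kappa N"
definition "beta m = 1 - tt m / tau m"
definition "L = 1 / (1 + S)"

definition avg :: "complex \<Rightarrow> complex" where
  "avg w = (1 / of_nat N) * (\<Sum>m=1..N.
           (1 - \<i> * (of_real (tt m) * w)) / (1 - \<i> * (of_real (tau m) * w)))"

definition alpha :: "complex \<Rightarrow> complex" where
  "alpha w = (- \<i> * w / complex_of_real c0) * (of_real A * csqrt (avg w) - 1)"

lemma alpha_eq: "alpha_nsw c0 rho0 kappa tau N \<omega> = alpha (of_real \<omega>)"
  unfolding alpha_nsw_def alpha_def avg_def A_def tt_def by simp

lemma S_nonneg: "S \<ge> 0"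
  unfolding S_def using kap rho0 by (intro sum_nonneg) (simp add: less_imp_le)

lemma A_sq: "A^2 = 1 + S" and A_pos: "A > 0"
proof -
  have "c0_tilde c0 rho0 kappa N = c0 / sqrt (1 + S)" unfolding c0_tilde_def S_def ..
  hence "A = sqrt (1 + S)" unfolding A_def using c0 S_nonneg by simp
  thus "A^2 = 1 + S" "A > 0" using S_nonneg by auto
qed

lemma beta_pos: "m \<in> {1..N} \<Longrightarrow> beta m > 0"
  unfolding beta_def using ttl[of m] tau[of m] by (simp add: tt_def)

lemma L_pos: "L > 0" unfolding L_def using S_nonneg by simp

lemma sum_tt: "(1 / real N) * (\<Sum>m=1..N. tt m / tau m) = L"
proof -
  have ct2: "(c0_tilde c0 rho0 kappa N)^2 = c0^2 / (1 + S)"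
    unfolding c0_tilde_def S_def[symmetric] using S_nonneg by (simp add: power_divide)
  have "\<And>m. m \<in> {1..N} \<Longrightarrow> tt m / tau m = 1 - real N * (c0^2 / (1 + S)) * rho0 * kappa m"
    using tau unfolding tt_def tau_tilde_def ct2 by (simp add: less_imp_neq[symmetric])
  hence "(\<Sum>m=1..N. tt m / tau m) = (\<Sum>m=1..N. 1 - real N * (c0^2 / (1 + S)) * rho0 * kappa m)"
    by (rule sum.cong[OF refl])
  also have "\<dots> = real N - real N / (1 + S) * (\<Sum>m=1..N. c0\<^sup>2 * rho0 * kappa m)"
    by (simp add: sum_subtractf sum_distrib_left mult_ac)
  also have "\<dots> = real N - real N / (1 + S) * S" unfolding S_def ..
  finally show ?thesis using N S_nonneg unfolding L_def by (simp add: field_simps)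
qed

lemma term_decomp:
  assumes "Im w \<ge> 0" "m \<in> {1..N}"
  shows "(1 - \<i> * (of_real (tt m) * w)) / (1 - \<i> * (of_real (tau m) * w))
       = of_real (tt m / tau m) + of_real (beta m) * (1 / (1 - \<i> * of_real (tau m) * w))"
proof -
  have nz: "1 - \<i> * of_real (tau m) * w \<noteq> 0" using denom_facts(1)[OF assms(1) tau[OF assms(2)]] .
  have t: "tau m \<noteq> 0" using tau[OF assms(2)] by simp
  show ?thesis using nz t unfolding beta_def
    by (simp add: field_simps of_real_divide)
qed

definition "qs w = (\<Sum>m=1..N. of_real (beta m) * (1 / (1 - \<i> * of_real (tau m) * w)))"

lemma avg_decomp: "Im w \<ge> 0 \<Longrightarrow> avg w = of_real L + (1 / of_nat N) * qs w"
proof -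
  assume h: "Im w \<ge> 0"
  have "(\<Sum>m=1..N. (1 - \<i> * (of_real (tt m) * w)) / (1 - \<i> * (of_real (tau m) * w)))
     = (\<Sum>m=1..N. of_real (tt m / tau m) +
          of_real (beta m) * (1 / (1 - \<i> * of_real (tau m) * w)))"
    by (rule sum.cong[OF refl]) (rule term_decomp[OF h])
  hence "avg w = (1 / of_nat N) * (\<Sum>m=1..N. of_real (tt m / tau m) +
          of_real (beta m) * (1 / (1 - \<i> * of_real (tau m) * w)))"
    unfolding avg_def by simp
  also have "\<dots> = (1 / of_nat N) * (\<Sum>m=1..N. of_real (tt m / tau m)) + (1 / of_nat N) * qs w"
    unfolding qs_def by (simp only: sum.distrib distrib_left)
  also have "(1 / of_nat N) * (\<Sum>m=1..N. of_real (tt m / tau m)) = (of_real L :: complex)"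
    unfolding sum_tt[symmetric]
    by (simp only: of_real_mult of_real_sum of_real_divide of_real_1 of_real_of_nat_eq)
  finally show ?thesis .
qed

lemma Re_ofreal_mult: "Re (complex_of_real b * z) = b * Re z" by simp

lemma Re_qs: "Im w \<ge> 0 \<Longrightarrow> Re (qs w) \<ge> 0"
  unfolding qs_def Re_sum
proof (intro sum_nonneg)
  fix m assume h: "Im w \<ge> 0" and m: "m \<in> {1..N}"
  have "Re (of_real (beta m) * (1 / (1 - \<i> * of_real (tau m) * w)))
      = beta m * Re (1 / (1 - \<i> * of_real (tau m) * w))"
    by (rule Re_ofreal_mult)
  also have "\<dots> \<ge> 0" using beta_pos[OF m] denom_facts(3)[OF h tau[OF m]] by simp
  finally show "Re (of_real (beta m) * (1 / (1 - \<i> * of_real (tau m) * w))) \<ge> 0" .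
qed

lemma Re_avg: "Im w \<ge> 0 \<Longrightarrow> Re (avg w) \<ge> L"
  using avg_decomp[of w] Re_qs[of w] N by simp

lemma avg_notin: "Im w \<ge> 0 \<Longrightarrow> avg w \<notin> \<real>\<^sub>\<le>\<^sub>0"
  using Re_avg[of w] L_pos by (auto simp: complex_nonpos_Reals_iff)

definition "K = (1 + S) / real N * (\<Sum>m=1..N. beta m / tau m)"

lemma w_qs: "Im w \<ge> 0 \<Longrightarrow> cmod (w * qs w) \<le> (\<Sum>m=1..N. beta m / tau m)"
proof -
  assume h: "Im w \<ge> 0"
  have "cmod (w * qs w) = cmod (\<Sum>m=1..N. of_real (beta m) * (w * (1 / (1 - \<i> * of_real (tau m) * w))))"
    unfolding qs_def sum_distrib_left by (simp add: mult_ac)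
  also have "\<dots> \<le> (\<Sum>m=1..N. cmod (of_real (beta m) * (w * (1 / (1 - \<i> * of_real (tau m) * w)))))"
    by (rule norm_sum)
  also have "\<dots> \<le> (\<Sum>m=1..N. beta m / tau m)"
  proof (rule sum_mono)
    fix m assume m: "m \<in> {1..N}"
    have "cmod (of_real (beta m) * (w * (1 / (1 - \<i> * of_real (tau m) * w))))
          = beta m * (cmod w * cmod (1 / (1 - \<i> * of_real (tau m) * w)))"
      using beta_pos[OF m] by (simp only: norm_mult norm_of_real)
    also have "\<dots> \<le> beta m * (1 / tau m)"
      using denom_facts(4)[OF h tau[OF m]] beta_pos[OF m] by (intro mult_left_mono) auto
    finally show "cmod (of_real (beta m) * (w * (1 / (1 - \<i> * of_real (tau m) * w)))) \<le> beta m / tau m"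
      by simp
  qed
  finally show ?thesis .
qed

lemma alpha_bound: "Im w \<ge> 0 \<Longrightarrow> cmod (alpha w) \<le> K / c0"
proof -
  assume h: "Im w \<ge> 0"
  define s where "s = csqrt (avg w)"
  have s2: "s^2 = avg w" unfolding s_def by simp
  have "Re (of_real A * s + 1) \<ge> 1" using A_pos Re_csqrt[of "avg w"] unfolding s_def by simp
  hence n1: "cmod (of_real A * s + 1) \<ge> 1" using complex_Re_le_cmod order_trans by blast
  have eq: "(of_real A * s - 1) * (of_real A * s + 1) = of_real (A^2) * avg w - 1"
    using s2 by (simp add: algebra_simps power2_eq_square)
  have eq2: "of_real (A^2) * avg w - 1 = of_real (1 + S) / of_nat N * qs w"
  proof -
    have SL: "(1 + S) * L = 1" unfolding L_def using S_nonneg by simp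
    have "of_real (A^2) * avg w - 1 = of_real ((1+S)*L) - 1 + of_real (1+S) * ((1/of_nat N) * qs w)"
      using avg_decomp[OF h] unfolding A_sq by (simp add: algebra_simps)
    thus ?thesis unfolding SL by simp
  qed
  have c1: "cmod (1 + complex_of_real S) = 1 + S"
    by (metis S_nonneg abs_of_nonneg add_nonneg_nonneg norm_of_real of_real_1 of_real_add zero_le_one)
  have "cmod (w * (of_real A * s - 1)) \<le> cmod (w * (of_real A * s - 1)) * cmod (of_real A * s + 1)"
    using n1 by (simp add: mult_le_cancel_left1)
  also have "\<dots> = cmod (w * (of_real (A^2) * avg w - 1))"
    by (metis eq mult.assoc norm_mult)
  also have "cmod (w * (of_real (A^2) * avg w - 1)) = (1 + S) / real N * cmod (w * qs w)"
    unfolding eq2 using S_nonneg c1 by (simp add: norm_mult norm_divide mult_ac)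
  also have "\<dots> \<le> K" unfolding K_def using w_qs[OF h] S_nonneg
    by (intro mult_left_mono) auto
  finally have "cmod (w * (of_real A * s - 1)) \<le> K" .
  moreover have "alpha w = (- \<i> / complex_of_real c0) * (w * (of_real A * s - 1))"
    unfolding alpha_def s_def by (simp add: mult_ac)
  hence "cmod (alpha w) = cmod (w * (of_real A * s - 1)) / c0"
    using c0 by (simp only: norm_mult norm_divide norm_minus_cancel norm_ii norm_of_real) simp
  ultimately show ?thesis using c0 by (simp add: divide_right_mono)
qed

end



lemma integrable_inv1sq: "integrable lborel (\<lambda>x::real. inverse (1 + x^2))"
  using integrable_inverse_1_plus_square unfolding set_integrable_def by simp

lemma halfplane_integral_zero:
  fixes f :: "complex \<Rightarrow> complex" and B :: real
  assumes diff: "\<And>w. Im w \<ge> 0 \<Longrightarrow> f field_differentiable at w"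
    and bnd: "\<And>w. Im w \<ge> 0 \<Longrightarrow> cmod (f w) \<le> B / (1 + (cmod w)^2)"
  shows "integrable lborel (\<lambda>x. f (of_real x))" "(\<integral>x. f (of_real x) \<partial>lborel) = 0"
proof -
  define H where "H = {w::complex. Im w \<ge> 0}"
  have cont: "continuous_on H f"
    unfolding H_def
    by (intro continuous_at_imp_continuous_on ballI field_differentiable_imp_continuous_at diff) simp
  have B0: "B \<ge> 0"
  proof -
    have "cmod (f 0) \<le> B" using bnd[of 0] by simp
    thus ?thesis using norm_ge_zero order_trans by blast
  qed
  have contR: "continuous_on UNIV (\<lambda>x::real. f (of_real x))"
    by (rule continuous_on_compose2[OF cont]) (auto simp: H_def intro: continuous_intros)
  have meas: "(\<lambda>x::real. f (of_real x)) \<in> borel_measurable lborel"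
    using borel_measurable_continuous_onI[OF contR] by simp
  have bndR: "cmod (f (of_real x)) \<le> B * inverse (1 + x^2)" for x :: real
    using bnd[of "of_real x"] by (simp add: divide_inverse)
  show int: "integrable lborel (\<lambda>x. f (of_real x))"
  proof (rule Bochner_Integration.integrable_bound[OF _ meas])
    show "integrable lborel (\<lambda>x::real. B * inverse (1 + x^2))"
      using integrable_inv1sq by simp
    show "AE x in lborel. cmod (f (of_real x)) \<le> norm (B * inverse (1 + x^2))"
      using bndR B0 by (auto intro!: always_eventually simp: abs_mult)
  qed
  define I where "I = (\<integral>x. f (of_real x) \<partial>lborel)"
  define R :: "nat \<Rightarrow> real" where "R n = real (Suc n)" for n
  have lim1: "(\<lambda>n. \<integral>x. indicator {-R n..R n} x *\<^sub>R f (of_real x) \<partial>lborel) \<longlonglongrightarrow> I"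
    unfolding I_def
  proof (rule integral_dominated_convergence[where w = "\<lambda>x. norm (f (of_real x))"])
    show "(\<lambda>x. f (of_real x)) \<in> borel_measurable lborel" by (rule meas)
    show "\<And>i. (\<lambda>x. indicator {-R i..R i} x *\<^sub>R f (of_real x)) \<in> borel_measurable lborel"
      using meas by measurable
    show "integrable lborel (\<lambda>x. norm (f (of_real x)))" using int by simp
    show "AE x in lborel. (\<lambda>i. indicator {-R i..R i} x *\<^sub>R f (of_real x)) \<longlonglongrightarrow> f (of_real x)"
    proof (rule always_eventually, rule allI)
      fix x :: real
      obtain n0 :: nat where "\<bar>x\<bar> \<le> real n0" using real_arch_simple by blast
      hence "\<forall>n\<ge>n0. indicator {-R n..R n} x *\<^sub>R f (of_real x) = f (of_real x)"
        unfolding R_def by (auto simp: indicator_def)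
      thus "(\<lambda>i. indicator {-R i..R i} x *\<^sub>R f (of_real x)) \<longlonglongrightarrow> f (of_real x)"
        by (intro tendsto_eventually) (auto simp: eventually_sequentially)
    qed
    show "\<And>i. AE x in lborel. norm (indicator {-R i..R i} x *\<^sub>R f (of_real x)) \<le> norm (f (of_real x))"
      by (auto simp: indicator_def)
  qed
  have eqI: "(\<integral>x. indicator {-R n..R n} x *\<^sub>R f (of_real x) \<partial>lborel)
             = integral {-R n..R n} (\<lambda>x. f (of_real x))" for n
  proof -
    have "set_integrable lborel {-R n..R n} (\<lambda>x. f (of_real x))"
      unfolding set_integrable_def by (rule integrable_mult_indicator) (auto intro: int)
    from set_borel_integral_eq_integral(2)[OF this] show ?thesis
      unfolding set_lebesgue_integral_def .
  qed
  have bound_n: "cmod (integral {-R n..R n} (\<lambda>x. f (of_real x))) \<le> B * pi / R n" for n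
  proof -
    define r where "r = R n"
    have r: "r > 0" "r \<ge> 1" unfolding r_def R_def by auto
    define p1 where "p1 = linepath (- complex_of_real r) (complex_of_real r)"
    define p2 where "p2 = part_circlepath 0 r 0 pi"
    have convH: "convex H" unfolding H_def by (rule convex_halfspace_Im_ge)
    have seg: "closed_segment (- complex_of_real r) (complex_of_real r) \<subseteq> H"
      by (rule closed_segment_subset) (auto simp: H_def intro: convH[unfolded H_def])
    have img2: "path_image p2 \<subseteq> H"
      unfolding p2_def H_def using r
      by (auto simp: path_image_part_circlepath Im_exp sin_ge_zero)
    have fin: "pathfinish p1 = pathstart p2" unfolding p1_def p2_def by simp
    have closed: "pathfinish (p1 +++ p2) = pathstart (p1 +++ p2)"
      unfolding p1_def p2_def by simp
    have v1: "valid_path p1" and v2: "valid_path p2" unfolding p1_def p2_def by simp_all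
    have c1: "f contour_integrable_on p1"
      unfolding p1_def by (rule contour_integrable_continuous_linepath) (rule continuous_on_subset[OF cont seg])
    have c2: "f contour_integrable_on p2"
      unfolding p2_def by (rule contour_integrable_continuous_part_circlepath)
         (rule continuous_on_subset[OF cont img2[unfolded p2_def]])
    have h1: "(f has_contour_integral integral {-r..r} (\<lambda>x. f (of_real x))) p1"
      using has_contour_integral_integral[OF c1] contour_integral_linepath_Reals_eq[of "- complex_of_real r" "complex_of_real r" f] r
      unfolding p1_def by simp
    have h2: "(f has_contour_integral contour_integral p2 f) p2"
      by (rule has_contour_integral_integral[OF c2])
    have hj: "(f has_contour_integral (integral {-r..r} (\<lambda>x. f (of_real x)) + contour_integral p2 f)) (p1 +++ p2)"
      by (rule has_contour_integral_join[OF h1 h2 v1 v2])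
    have img: "path_image (p1 +++ p2) \<subseteq> H"
      unfolding path_image_join[OF fin] using seg img2 unfolding p1_def by auto
    have h0: "(f has_contour_integral 0) (p1 +++ p2)"
      by (rule Cauchy_theorem_convex[OF cont convH finite.emptyI _ valid_path_join[OF v1 v2 fin] img closed])
         (use interior_subset diff in \<open>auto simp: H_def\<close>)
    have sum0: "integral {-r..r} (\<lambda>x. f (of_real x)) = - contour_integral p2 f"
      using has_contour_integral_unique[OF hj h0] by (simp add: eq_neg_iff_add_eq_0)
    have "cmod (contour_integral p2 f) \<le> B / (1 + r^2) * r * (pi - 0)"
      unfolding p2_def
    proof (rule has_contour_integral_bound_part_circlepath[OF h2[unfolded p2_def]])
      show "0 \<le> B / (1 + r^2)" using B0 by simp
      show "0 < r" "0 \<le> pi" using r by auto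
      fix x assume x: "x \<in> path_image (part_circlepath 0 r 0 pi)"
      hence "cmod x = r" using in_path_image_part_circlepath[OF x] r by simp
      moreover have "Im x \<ge> 0" using x img2 unfolding p2_def H_def by auto
      ultimately show "cmod (f x) \<le> B / (1 + r^2)" using bnd[of x] by simp
    qed
    also have "\<dots> = (B * pi) * (r / (1 + r^2))" by simp
    also have "\<dots> \<le> (B * pi) * (1 / r)"
    proof (rule mult_left_mono)
      show "r / (1 + r^2) \<le> 1 / r" using r by (simp add: divide_simps power2_eq_square add_pos_nonneg)
      show "0 \<le> B * pi" using B0 by simp
    qed
    also have "\<dots> = B * pi / r" by simp
    finally show ?thesis using sum0 unfolding r_def by simp
  qed
  have lim2: "(\<lambda>n. integral {-R n..R n} (\<lambda>x. f (of_real x))) \<longlonglongrightarrow> 0"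
  proof (rule Lim_null_comparison[OF always_eventually])
    show "\<forall>n. cmod (integral {-R n..R n} (\<lambda>x. f (of_real x))) \<le> B * pi * inverse (real (Suc n))"
      using bound_n unfolding R_def by (simp add: divide_inverse)
    show "(\<lambda>n. B * pi * inverse (real (Suc n))) \<longlonglongrightarrow> 0"
      using tendsto_mult_right_zero[OF LIMSEQ_inverse_real_of_nat] by simp
  qed
  show "(\<integral>x. f (of_real x) \<partial>lborel) = 0"
    using LIMSEQ_unique[OF lim1[unfolded eqI] lim2] unfolding I_def .
qed




context nsw begin

lemma avg_diff: "Im w \<ge> 0 \<Longrightarrow> avg field_differentiable at w"
proof -
  assume h: "Im w \<ge> 0"
  have eq: "avg = (\<lambda>w. (1 / of_nat N) * (\<Sum>m=1..N.
           (1 - \<i> * (of_real (tt m) * w)) / (1 - \<i> * (of_real (tau m) * w))))"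
    by (rule ext) (simp add: avg_def)
  show ?thesis unfolding eq
  proof (intro field_differentiable_mult field_differentiable_const field_differentiable_sum
      field_differentiable_divide field_differentiable_diff field_differentiable_ident
      field_differentiable_linear)
    fix m assume m: "m \<in> {1..N}"
    show "1 - \<i> * (of_real (tau m) * w) \<noteq> 0"
      using denom_facts(1)[OF h tau[OF m]] by (simp add: mult.assoc)
  qed
qed

lemma alpha_diff: "Im w \<ge> 0 \<Longrightarrow> alpha field_differentiable at w"
proof -
  assume h: "Im w \<ge> 0"
  have eq: "alpha = (\<lambda>w. (- \<i> * w / complex_of_real c0) * (of_real A * (csqrt \<circ> avg) w - 1))"
    by (rule ext) (simp add: alpha_def)
  have cs: "(csqrt \<circ> avg) field_differentiable at w"
    by (rule field_differentiable_compose[OF avg_diff[OF h] field_differentiable_at_csqrt[OF avg_notin[OF h]]])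
  show ?thesis unfolding eq
    by (intro field_differentiable_mult field_differentiable_divide field_differentiable_diff
      field_differentiable_const field_differentiable_ident cs field_differentiable_minus)
       (use c0 in auto)
qed

definition G :: "real \<Rightarrow> real \<Rightarrow> complex \<Rightarrow> complex" where
  "G r t w = exp (- alpha w * of_real r) * exp (- \<i> * w * of_real t) / (1 - \<i> * w)^2"

lemma one_minus_iw: "Im w \<ge> 0 \<Longrightarrow> 1 - \<i> * w \<noteq> 0"
  using denom_facts(1)[of w 1] by simp

lemma G_diff: "Im w \<ge> 0 \<Longrightarrow> G r t field_differentiable at w"
proof -
  assume h: "Im w \<ge> 0"
  have eq: "G r t = (\<lambda>w. (exp \<circ> (\<lambda>w. - alpha w * of_real r)) w * (exp \<circ> (\<lambda>w. - \<i> * w * of_real t)) w / (1 - \<i> * w)^2)"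
    by (rule ext) (simp add: G_def)
  have a: "(\<lambda>w. - alpha w * of_real r) field_differentiable at w"
    by (intro field_differentiable_mult field_differentiable_minus alpha_diff[OF h] field_differentiable_const)
  have b: "(\<lambda>w. - \<i> * w * of_real t) field_differentiable at w"
    by (intro field_differentiable_mult field_differentiable_minus field_differentiable_const field_differentiable_ident)
  have ex: "exp field_differentiable at z" for z :: complex
    using field_differentiable_within_exp[of z UNIV] by simp
  have ea: "(exp \<circ> (\<lambda>w. - alpha w * of_real r)) field_differentiable at w"
    by (rule field_differentiable_compose[OF a ex])
  have eb: "(exp \<circ> (\<lambda>w. - \<i> * w * of_real t)) field_differentiable at w"
    by (rule field_differentiable_compose[OF b ex])
  have d: "(\<lambda>w. (1 - \<i> * w)^2) field_differentiable at w"
    by (intro field_differentiable_power field_differentiable_diff field_differentiable_const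
        field_differentiable_mult field_differentiable_ident)
  show ?thesis unfolding eq
    by (rule field_differentiable_divide[OF field_differentiable_mult[OF ea eb] d])
       (use one_minus_iw[OF h] in simp)
qed

lemma G_bound:
  assumes h: "Im w \<ge> 0" and r: "r \<ge> 0" and t: "t \<le> 0"
  shows "cmod (G r t w) \<le> exp (r * K / c0) / (1 + (cmod w)^2)"
proof -
  have e1: "cmod (exp (- alpha w * of_real r)) \<le> exp (r * K / c0)"
  proof -
    have "Re (- alpha w * of_real r) = - (r * Re (alpha w))" by simp
    also have "\<dots> = r * (- Re (alpha w))" by simp
    also have "\<dots> \<le> r * cmod (alpha w)"
    proof (rule mult_left_mono[OF _ r])
      show "- Re (alpha w) \<le> cmod (alpha w)" using abs_Re_le_cmod[of "alpha w"] by linarith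
    qed
    also have "\<dots> \<le> r * (K / c0)" using alpha_bound[OF h] r by (rule mult_left_mono)
    finally show ?thesis by simp
  qed
  have e2: "cmod (exp (- \<i> * w * of_real t)) \<le> 1"
  proof -
    have "Re (- \<i> * w * of_real t) = t * Im w" by simp
    also have "\<dots> \<le> 0" using h t by (simp add: mult_nonpos_nonneg)
    finally show ?thesis by simp
  qed
  have d: "1 + (cmod w)^2 \<le> cmod ((1 - \<i> * w)^2)"
  proof -
    have c: "(cmod w)^2 = (Re w)^2 + (Im w)^2" by (rule cmod_power2)
    have e: "cmod ((1 - \<i> * w)^2) = (1 + Im w)^2 + (Re w)^2"
      by (simp add: norm_power cmod_power2)
    have f: "(1 + Im w)^2 = 1 + 2 * Im w + (Im w)^2" by (simp add: power2_eq_square algebra_simps)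
    show ?thesis using h c e f by linarith
  qed
  have "cmod (G r t w) = cmod (exp (- alpha w * of_real r)) * cmod (exp (- \<i> * w * of_real t))
          / cmod ((1 - \<i> * w)^2)"
    unfolding G_def by (simp only: norm_mult norm_divide)
  also have "\<dots> \<le> exp (r * K / c0) * 1 / cmod ((1 - \<i> * w)^2)"
    by (intro divide_right_mono mult_mono e1 e2) auto
  also have "\<dots> \<le> exp (r * K / c0) / (1 + (cmod w)^2)"
  proof -
    have p: "0 < 1 + (cmod w)^2" by (simp add: add_pos_nonneg)
    have "exp (r * K / c0) / cmod ((1 - \<i> * w)^2) \<le> exp (r * K / c0) / (1 + (cmod w)^2)"
      by (rule divide_left_mono[OF d]) (use p d in \<open>auto intro!: mult_pos_pos\<close>)
    thus ?thesis by simp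
  qed
  finally show ?thesis .
qed

lemma G_integral_zero:
  assumes "r \<ge> 0" "t \<le> 0"
  shows "integrable lborel (\<lambda>x. G r t (of_real x))" "(\<integral>x. G r t (of_real x) \<partial>lborel) = 0"
  using halfplane_integral_zero[of "G r t" "exp (r * K / c0)", OF G_diff G_bound[OF _ assms]]
  by auto

end



lemma lborel_eq_interval:
  fixes f :: "real \<Rightarrow> complex"
  assumes cont: "continuous_on UNIV f" and z: "\<And>t. t \<notin> {a..b} \<Longrightarrow> f t = 0"
  shows "integrable lborel f" "(\<integral>t. f t \<partial>lborel) = integral {a..b} f"
proof -
  have eq: "f = (\<lambda>x. indicator {a..b} x *\<^sub>R f x)"
    using z by (auto simp: indicator_def fun_eq_iff)
  have si: "set_integrable lborel {a..b} f"
    unfolding set_integrable_def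
    by (rule borel_integrable_compact[OF compact_Icc continuous_on_subset[OF cont]]) auto
  thus "integrable lborel f" unfolding set_integrable_def by (subst eq)
  show "(\<integral>t. f t \<partial>lborel) = integral {a..b} f"
    using set_borel_integral_eq_integral(2)[OF si] unfolding set_lebesgue_integral_def
    by (subst eq) simp
qed

lemma exp_vd: "((\<lambda>t::real. exp (- \<i> * complex_of_real (\<omega> * t))) has_vector_derivative
     (- \<i> * complex_of_real \<omega>) * exp (- \<i> * complex_of_real (\<omega> * t))) (at t within S)"
proof -
  have "((\<lambda>z. exp (- \<i> * complex_of_real \<omega> * z)) has_field_derivative
        exp (- \<i> * complex_of_real \<omega> * of_real t) * (- \<i> * complex_of_real \<omega>)) (at (of_real t))"
    by (auto intro!: derivative_eq_intros)
  from has_vector_derivative_real_field[OF this]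
  show ?thesis by (simp add: mult_ac)
qed

lemma fourier_ibp:
  fixes u u' :: "real \<Rightarrow> complex"
  assumes der: "\<And>t. (u has_vector_derivative u' t) (at t)"
    and cu': "continuous_on UNIV u'"
    and z: "\<And>t. t \<notin> {-M..M} \<Longrightarrow> u t = 0" and z': "\<And>t. t \<notin> {-M..M} \<Longrightarrow> u' t = 0"
    and M: "M \<ge> 0"
  shows "(\<integral>t. exp (- \<i> * complex_of_real (\<omega> * t)) * u' t \<partial>lborel)
       = \<i> * of_real \<omega> * (\<integral>t. exp (- \<i> * complex_of_real (\<omega> * t)) * u t \<partial>lborel)"
proof -
  define e where "e t = exp (- \<i> * complex_of_real (\<omega> * t))" for t
  have cu: "continuous_on UNIV u"
    using der by (intro continuous_at_imp_continuous_on ballI has_vector_derivative_continuous) auto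
  have ce: "continuous_on UNIV e" unfolding e_def by (intro continuous_intros)
  have i1: "(\<integral>t. e t * u' t \<partial>lborel) = integral {-M-1..M+1} (\<lambda>t. e t * u' t)"
    by (rule lborel_eq_interval(2)) (use z' ce cu' in \<open>auto intro: continuous_intros\<close>)
  have i2: "(\<integral>t. e t * u t \<partial>lborel) = integral {-M-1..M+1} (\<lambda>t. e t * u t)"
    by (rule lborel_eq_interval(2)) (use z ce cu in \<open>auto intro: continuous_intros\<close>)
  have int1: "(\<lambda>t. e t * u' t) integrable_on {-M-1..M+1}"
    by (rule integrable_continuous_interval) (use ce cu' in \<open>auto intro: continuous_intros continuous_on_subset\<close>)
  have int2: "(\<lambda>t. e t * u t) integrable_on {-M-1..M+1}"
    by (rule integrable_continuous_interval) (use ce cu in \<open>auto intro: continuous_intros continuous_on_subset\<close>)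
  have ftc: "((\<lambda>t. e t * u' t + (- \<i> * complex_of_real \<omega>) * (e t * u t)) has_integral
        (e (M+1) * u (M+1) - e (-M-1) * u (-M-1))) {-M-1..M+1}"
  proof (rule fundamental_theorem_of_calculus)
    show "-M-1 \<le> M+1" using M by simp
    fix x assume "x \<in> {-M-1..M+1}"
    have "((\<lambda>t. e t * u t) has_vector_derivative
        (e x * u' x + (- \<i> * complex_of_real \<omega>) * e x * u x)) (at x within {-M-1..M+1})"
      unfolding e_def
      by (rule has_vector_derivative_mult[OF exp_vd has_vector_derivative_at_within[OF der]])
    thus "((\<lambda>t. e t * u t) has_vector_derivative
        (e x * u' x + (- \<i> * complex_of_real \<omega>) * (e x * u x))) (at x within {-M-1..M+1})"
      by (simp add: mult_ac)
  qed
  have "u (M+1) = 0" "u (-M-1) = 0" using z M by auto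
  hence "integral {-M-1..M+1} (\<lambda>t. e t * u' t + (- \<i> * complex_of_real \<omega>) * (e t * u t)) = 0"
    using ftc by (simp add: integral_unique)
  moreover have "integral {-M-1..M+1} (\<lambda>t. e t * u' t + (- \<i> * complex_of_real \<omega>) * (e t * u t))
      = integral {-M-1..M+1} (\<lambda>t. e t * u' t) + (- \<i> * complex_of_real \<omega>) * integral {-M-1..M+1} (\<lambda>t. e t * u t)"
    by (simp only: integral_add[OF int1 integrable_on_mult_right[OF int2]] integral_mult_right)
  ultimately show ?thesis unfolding e_def[symmetric] i1 i2 by (simp add: algebra_simps eq_neg_iff_add_eq_0)
qed




lemma test_fun_facts:
  assumes "test_fun_on {..<0} \<phi>"
  obtains D :: "nat \<Rightarrow> real \<Rightarrow> complex" and M :: real where "D 0 = \<phi>"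
    "\<And>k t. (D k has_vector_derivative D (Suc k) t) (at t)"
    "\<And>k. continuous_on UNIV (D k)" "M \<ge> 0"
    "\<And>k t. t \<notin> {-M..M} \<Longrightarrow> D k t = 0" "\<And>k t. D k t \<noteq> 0 \<Longrightarrow> t < 0"
proof -
  define Ks where "Ks = closure {t. \<phi> t \<noteq> 0}"
  from assms obtain D :: "nat \<Rightarrow> real \<Rightarrow> complex" where D0: "D 0 = \<phi>"
    and der: "\<And>k t. (D k has_vector_derivative D (Suc k) t) (at t)"
    and cK: "compact Ks" and sK: "Ks \<subseteq> {..<0}"
    unfolding test_fun_on_def smooth_fun_def Ks_def by blast
  have van: "t \<notin> Ks \<Longrightarrow> D k t = 0" for k t
  proof (induction k arbitrary: t)
    case 0 thus ?case using closure_subset[of "{t. \<phi> t \<noteq> 0}"] by (auto simp: D0 Ks_def)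
  next
    case (Suc k)
    have op: "open (- Ks)" unfolding Ks_def by auto
    have "(D k has_vector_derivative 0) (at t)"
      by (rule has_vector_derivative_transform_within_open[OF has_vector_derivative_const op])
         (use Suc in auto)
    thus ?case using vector_derivative_unique_at[OF der[of k t]] by simp
  qed
  have cont: "continuous_on UNIV (D k)" for k
    using der by (intro continuous_at_imp_continuous_on ballI has_vector_derivative_continuous) auto
  obtain a where a: "\<And>x. x \<in> Ks \<Longrightarrow> norm x \<le> a"
    using compact_imp_bounded[OF cK] unfolding bounded_iff by blast
  define M where "M = max 0 a"
  have "t \<notin> {-M..M} \<Longrightarrow> D k t = 0" for k t
  proof -
    assume t: "t \<notin> {-M..M}"
    have "t \<notin> Ks"
    proof
      assume "t \<in> Ks"
      hence "\<bar>t\<bar> \<le> a" using a[of t] by simp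
      thus False using t unfolding M_def by auto
    qed
    thus ?thesis by (rule van)
  qed
  moreover have "D k t \<noteq> 0 \<Longrightarrow> t < 0" for k t using van[of t k] sK by auto
  moreover have "M \<ge> 0" unfolding M_def by simp
  ultimately show ?thesis using that[OF D0 der cont] by blast
qed




context nsw begin

lemma alpha_isCont: "isCont alpha (of_real x)"
  using alpha_diff[of "of_real x"] by (simp add: field_differentiable_imp_continuous_at)

lemma norm_G_real: "cmod (G r t (of_real \<omega>)) = cmod (G r 0 (of_real \<omega>))"
proof -
  have "cmod (exp (- \<i> * complex_of_real \<omega> * complex_of_real t)) = 1"
    by (simp add: norm_exp_eq_Re)
  thus ?thesis unfolding G_def by (simp only: norm_mult norm_divide) simp
qed

lemma pairing_zero:
  assumes r: "r \<ge> 0" and tf: "test_fun_on {..<0} \<phi>"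
  shows "kernel_pairing (\<lambda>\<omega>. exp (- alpha_nsw c0 rho0 kappa tau N \<omega> * of_real r)) \<phi> = 0"
proof -
  obtain D M where D0: "D 0 = \<phi>"
    and der: "\<And>k t. (D k has_vector_derivative D (Suc k) t) (at t)"
    and cD: "\<And>k. continuous_on UNIV (D k)" and M: "M \<ge> 0"
    and zD: "\<And>k t. t \<notin> {-M..M} \<Longrightarrow> D k t = 0" and nD: "\<And>k t. D k t \<noteq> 0 \<Longrightarrow> t < 0"
    using test_fun_facts[OF tf] by metis
  define e where "e \<omega> t = exp (- \<i> * complex_of_real (\<omega> * t))" for \<omega> t :: real
  define F where "F u \<omega> = (\<integral>t. e \<omega> t * u t \<partial>lborel)" for u :: "real \<Rightarrow> complex" and \<omega>
  define \<psi> where "\<psi> t = D 0 t - 2 * D 1 t + D 2 t" for t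
  have ce: "continuous_on UNIV (e \<omega>)" for \<omega> unfolding e_def by (intro continuous_intros)
  have intD: "integrable lborel (\<lambda>t. e \<omega> t * D k t)" for \<omega> k
    by (rule lborel_eq_interval(1)[of _ "-M" M]) (use zD ce cD in \<open>auto intro: continuous_intros\<close>)
  have cpsi: "continuous_on UNIV \<psi>" unfolding \<psi>_def using cD by (intro continuous_intros)
  have zpsi: "t \<notin> {-M..M} \<Longrightarrow> \<psi> t = 0" for t unfolding \<psi>_def using zD by simp
  have npsi: "\<psi> t \<noteq> 0 \<Longrightarrow> t < 0" for t
  proof (rule ccontr)
    assume h: "\<psi> t \<noteq> 0" "\<not> t < 0"
    hence "D k t = 0" for k using nD by blast
    thus False using h(1) unfolding \<psi>_def by simp
  qed
  have intpsi: "integrable lborel \<psi>" by (rule lborel_eq_interval(1)[OF cpsi zpsi])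
  have ibp: "F (D (Suc k)) \<omega> = \<i> * of_real \<omega> * F (D k) \<omega>" for k \<omega>
    unfolding F_def e_def
    by (rule fourier_ibp[OF der cD zD zD M])
  have Fpsi: "F \<psi> \<omega> = (1 - \<i> * of_real \<omega>)^2 * F (D 0) \<omega>" for \<omega>
  proof -
    have "F \<psi> \<omega> = (\<integral>t. e \<omega> t * D 0 t - 2 * (e \<omega> t * D 1 t) + e \<omega> t * D 2 t \<partial>lborel)"
      unfolding F_def \<psi>_def by (simp add: algebra_simps)
    also have "\<dots> = F (D 0) \<omega> - 2 * F (D 1) \<omega> + F (D 2) \<omega>"
      unfolding F_def using intD by simp
    also have "\<dots> = (1 - \<i> * of_real \<omega>)^2 * F (D 0) \<omega>"
      using ibp[of 0 \<omega>] ibp[of 1 \<omega>] by (simp add: numeral_2_eq_2 power2_eq_square algebra_simps)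
    finally show ?thesis .
  qed
  define c where "c = 1 / complex_of_real (sqrt (2 * pi))"
  define \<Phi> where "\<Phi> \<omega> t = G r t (of_real \<omega>) * \<psi> t" for \<omega> t
  have step1: "exp (- alpha_nsw c0 rho0 kappa tau N \<omega> * of_real r) * inv_fourier \<phi> \<omega>
       = c * (\<integral>t. \<Phi> \<omega> t \<partial>lborel)" for \<omega>
  proof -
    have nz: "(1 - \<i> * complex_of_real \<omega>)^2 \<noteq> 0" using one_minus_iw[of "of_real \<omega>"] by simp
    have "inv_fourier \<phi> \<omega> = c * F (D 0) \<omega>"
      unfolding inv_fourier_def c_def F_def e_def D0 by (simp add: mult.commute)
    also have "F (D 0) \<omega> = F \<psi> \<omega> / (1 - \<i> * of_real \<omega>)^2" using Fpsi[of \<omega>] nz by simp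
    finally have "exp (- alpha_nsw c0 rho0 kappa tau N \<omega> * of_real r) * inv_fourier \<phi> \<omega>
        = c * ((\<integral>t. e \<omega> t * \<psi> t \<partial>lborel) * (exp (- alpha (of_real \<omega>) * of_real r) / (1 - \<i> * of_real \<omega>)^2))"
      unfolding F_def alpha_eq by (simp add: mult_ac)
    also have "(\<integral>t. e \<omega> t * \<psi> t \<partial>lborel) * (exp (- alpha (of_real \<omega>) * of_real r) / (1 - \<i> * of_real \<omega>)^2)
       = (\<integral>t. e \<omega> t * \<psi> t * (exp (- alpha (of_real \<omega>) * of_real r) / (1 - \<i> * of_real \<omega>)^2) \<partial>lborel)"
      by simp
    also have "\<dots> = (\<integral>t. \<Phi> \<omega> t \<partial>lborel)"
      unfolding \<Phi>_def G_def e_def by (rule Bochner_Integration.integral_cong) (simp_all add: mult_ac)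
    finally show ?thesis .
  qed
  have cPhi: "continuous_on UNIV (\<lambda>p. \<Phi> (fst p) (snd p))"
  proof (rule continuous_at_imp_continuous_on, rule ballI)
    fix p :: "real \<times> real"
    have ca: "isCont (\<lambda>p::real\<times>real. alpha (of_real (fst p))) p"
      by (rule isCont_o2[where f="\<lambda>p. complex_of_real (fst p)" and a=p and g=alpha, OF _ alpha_isCont[of "fst p"]])
         (intro continuous_intros)
    have cp: "isCont (\<lambda>p::real\<times>real. \<psi> (snd p)) p"
      by (rule isCont_o2[where f=snd and a=p and g=\<psi>, OF _ continuous_on_interior[OF cpsi]]) (auto intro: continuous_intros)
    have nz: "(1 - \<i> * complex_of_real (fst p))^2 \<noteq> 0" using one_minus_iw[of "of_real (fst p)"] by simp
    show "isCont (\<lambda>p. \<Phi> (fst p) (snd p)) p"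
      unfolding \<Phi>_def G_def using ca cp nz by (intro continuous_intros) auto
  qed
  have measPhi': "(\<lambda>p. \<Phi> (fst p) (snd p)) \<in> borel_measurable (lborel \<Otimes>\<^sub>M lborel)"
    unfolding lborel_prod measurable_lborel2 by (rule borel_measurable_continuous_onI[OF cPhi])
  have measPhi: "(\<lambda>(\<omega>, t). \<Phi> \<omega> t) \<in> borel_measurable (lborel \<Otimes>\<^sub>M lborel)"
    unfolding case_prod_beta' by (rule measPhi')
  have intG0: "integrable lborel (\<lambda>\<omega>. G r 0 (of_real \<omega>))" by (rule G_integral_zero(1)[OF r order_refl])
  have normPhi: "cmod (\<Phi> \<omega> t) = cmod (G r 0 (of_real \<omega>)) * cmod (\<psi> t)" for \<omega> t
    unfolding \<Phi>_def norm_mult by (simp only: norm_G_real[of r t \<omega>])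
  have intprod: "integrable (lborel \<Otimes>\<^sub>M lborel) (\<lambda>(\<omega>, t). \<Phi> \<omega> t)"
  proof (rule lborel_pair.Fubini_integrable[OF measPhi])
    show "integrable lborel (\<lambda>\<omega>. \<integral>t. norm (case (\<omega>, t) of (\<omega>, t) \<Rightarrow> \<Phi> \<omega> t) \<partial>lborel)"
    proof -
      have eq: "(\<lambda>\<omega>. \<integral>t. norm (case (\<omega>, t) of (\<omega>, t) \<Rightarrow> \<Phi> \<omega> t) \<partial>lborel)
          = (\<lambda>\<omega>. cmod (G r 0 (of_real \<omega>)) * (\<integral>t. cmod (\<psi> t) \<partial>lborel))"
        by (simp add: normPhi)
      show ?thesis unfolding eq
        by (rule integrable_mult_left) (rule integrable_norm[OF intG0])
    qed
    show "AE \<omega> in lborel. integrable lborel (\<lambda>t. case (\<omega>, t) of (\<omega>, t) \<Rightarrow> \<Phi> \<omega> t)"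
    proof (rule always_eventually, rule allI)
      fix \<omega> :: real
      have m: "(\<lambda>t. \<Phi> \<omega> t) \<in> borel_measurable lborel"
        using measPhi by measurable
      show "integrable lborel (\<lambda>t. case (\<omega>, t) of (\<omega>, t) \<Rightarrow> \<Phi> \<omega> t)"
        unfolding prod.case
        by (rule Bochner_Integration.integrable_bound[OF _ m,
              of "\<lambda>t. of_real (cmod (G r 0 (of_real \<omega>))) * \<psi> t"])
           (use intpsi in \<open>auto simp: normPhi norm_mult\<close>)
    qed
  qed
  have fub: "(\<integral>t. (\<integral>\<omega>. \<Phi> \<omega> t \<partial>lborel) \<partial>lborel) = (\<integral>\<omega>. (\<integral>t. \<Phi> \<omega> t \<partial>lborel) \<partial>lborel)"
    by (rule lborel_pair.Fubini_integral) (use intprod in \<open>simp add: case_prod_beta'\<close>)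
  have inner0: "(\<integral>\<omega>. \<Phi> \<omega> t \<partial>lborel) = 0" for t
  proof (cases "\<psi> t = 0")
    case True thus ?thesis unfolding \<Phi>_def by simp
  next
    case False
    hence "t \<le> 0" using npsi by force
    thus ?thesis unfolding \<Phi>_def using G_integral_zero(2)[OF r] by simp
  qed
  have "kernel_pairing (\<lambda>\<omega>. exp (- alpha_nsw c0 rho0 kappa tau N \<omega> * of_real r)) \<phi>
      = c * (\<integral>\<omega>. c * (\<integral>t. \<Phi> \<omega> t \<partial>lborel) \<partial>lborel)"
    unfolding kernel_pairing_def c_def[symmetric] step1 ..
  also have "\<dots> = 0" using fub inner0 by simp
  finally show ?thesis .
qed

end

theorem theorem6:
  fixes N :: nat and c0 rho0 :: real and kappa tau :: "nat \<Rightarrow> real"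
  assumes "N \<ge> 1"
    and "c0 > 0" and "rho0 > 0"
    and "\<And>m. m \<in> {1..N} \<Longrightarrow> kappa m > 0"
    and "\<And>m. m \<in> {1..N} \<Longrightarrow> tau m > 0"
    and "\<And>m. m \<in> {1..N} \<Longrightarrow> tau_tilde c0 rho0 kappa tau N m < tau m"
  shows "causal_kernel
           (\<lambda>(x::real^3) \<omega>. exp (- alpha_nsw c0 rho0 kappa tau N \<omega> * complex_of_real (norm x)))"
proof -
  interpret nsw N c0 rho0 kappa tau by (unfold_locales; fact assms)
  show ?thesis unfolding causal_kernel_def
    using pairing_zero by simp
qed



end
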